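(* Let $p\in(1,2)$. For $\gamma>0$ let $r_\gamma>0$ satisfy $r_\gamma=o(e^{-\gamma^p})$ and $\ln(r_\gamma e^{\gamma^p})=o(\gamma^p)$ as $\gamma\to\infty$, and let $\varphi_\gamma(x)=\left(\frac2p\right)^{1/p}\gamma\left(1-\frac1{\gamma^p}\ln\left(1+\frac{|x|^2}{r_\gamma^2}\right)\right)_+$ on $\mathbb R^2$. For $t\in[0,1]$ let $\tau(t,\gamma)\in[0,(2/p)^{1/p}\gamma]$ be defined by $$\frac{\int_{\mathbb R^2}\left(e^{(\varphi_\gamma-\tau)_+^p}-1\right)dx}{\int_{\mathbb R^2}\left(e^{\varphi_\gamma^p}-1\right)dx}=t.$$ Then for any fixed $\bar t\in(0,1]$, $\tau(t,\gamma)\to0$ as $\gamma\to\infty$, uniformly for $t\in[\bar t,1]$.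
   Context: $(s)_+=\max\{s,0\}$. The left-hand side of the defining relation is a continuous strictly decreasing function of $\tau\in[0,(2/p)^{1/p}\gamma]$ from $1$ to $0$, so $\tau(t,\gamma)$ is well defined (with $\tau(0,\gamma)=(2/p)^{1/p}\gamma$, $\tau(1,\gamma)=0$). *)

theory Defs
  imports "HOL-Analysis.Analysis" "HOL-Library.Landau_Symbols"
begin

definition phi :: "real \<Rightarrow> (real \<Rightarrow> real) \<Rightarrow> real \<Rightarrow> real^2 \<Rightarrow> real" where
  "phi p r \<gamma> x = (2 / p) powr (1 / p) * \<gamma> *
     max 0 (1 - ln (1 + (norm x)\<^sup>2 / (r \<gamma>)\<^sup>2) / \<gamma> powr p)"

definition ratio :: "real \<Rightarrow> (real \<Rightarrow> real) \<Rightarrow> real \<Rightarrow> real \<Rightarrow> real" where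
  "ratio p r \<gamma> \<tau> =
     (LINT x|lborel. exp ((max 0 (phi p r \<gamma> x - \<tau>)) powr p) - 1) /
     (LINT x|lborel. exp ((phi p r \<gamma> x) powr p) - 1)"

definition tau :: "real \<Rightarrow> (real \<Rightarrow> real) \<Rightarrow> real \<Rightarrow> real \<Rightarrow> real" where
  "tau p r t \<gamma> = (THE \<tau>. \<tau> \<in> {0 .. (2 / p) powr (1 / p) * \<gamma>} \<and> ratio p r \<gamma> \<tau> = t)"

end

theory Submission
  imports Defs
begin

lemma cpos: "1 < p \<Longrightarrow> (2/p) powr (1/p) > (0::real)" by simp
lemma cpowr: "1 < p \<Longrightarrow> ((2/p) powr (1/p)) powr p = 2/(p::real)"
  by (simp add: powr_powr)

lemma phi_nonneg: "1 < p \<Longrightarrow> 0 \<le> \<gamma> \<Longrightarrow> 0 \<le> phi p r \<gamma> x"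
  unfolding phi_def by simp

lemma phi_le: assumes "1 < p" "0 < \<gamma>" shows "phi p r \<gamma> x \<le> (2/p) powr (1/p) * \<gamma>"
proof -
  have "ln (1 + (norm x)\<^sup>2 / (r \<gamma>)\<^sup>2) \<ge> 0" by simp
  hence "ln (1 + (norm x)\<^sup>2 / (r \<gamma>)\<^sup>2) / \<gamma> powr p \<ge> 0" by simp
  hence "max 0 (1 - ln (1 + (norm x)\<^sup>2 / (r \<gamma>)\<^sup>2) / \<gamma> powr p) \<le> 1" by simp
  thus ?thesis unfolding phi_def using assms 
    by (metis cpos less_eq_real_def mult_left_le mult_pos_pos)
qed

lemma phi_0: assumes "1 < p" "0 < \<gamma>" shows "phi p r \<gamma> 0 = (2/p) powr (1/p) * \<gamma>"
  unfolding phi_def by simp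

lemma phi_zero: assumes "1 < p" "0 < \<gamma>" "r \<gamma> > 0"
  and "norm x \<ge> r \<gamma> * sqrt (exp (\<gamma> powr p))"
  shows "phi p r \<gamma> x = 0"
proof -
  have "(r \<gamma> * sqrt (exp (\<gamma> powr p)))\<^sup>2 \<le> (norm x)\<^sup>2"
    using assms(4) by (intro power_mono) (use assms in auto)
  hence "(r \<gamma>)\<^sup>2 * exp (\<gamma> powr p) \<le> (norm x)\<^sup>2" by (simp add: power_mult_distrib)
  hence "exp (\<gamma> powr p) \<le> (norm x)\<^sup>2 / (r \<gamma>)\<^sup>2" using assms(3)
    by (simp add: field_simps)
  hence "exp (\<gamma> powr p) \<le> 1 + (norm x)\<^sup>2 / (r \<gamma>)\<^sup>2" by simp
  hence "\<gamma> powr p \<le> ln (1 + (norm x)\<^sup>2 / (r \<gamma>)\<^sup>2)"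
    by (metis exp_gt_zero ln_exp ln_le_cancel_iff order_less_le_trans)
  hence "1 \<le> ln (1 + (norm x)\<^sup>2 / (r \<gamma>)\<^sup>2) / \<gamma> powr p" using assms(2) by simp
  thus ?thesis unfolding phi_def by simp
qed

lemma phi_lower: assumes "1 < p" "0 < \<gamma>" "r \<gamma> > 0" "0 \<le> u" "u \<le> 1"
  and "norm x \<le> r \<gamma> * sqrt (exp (u * \<gamma> powr p) - 1)"
  shows "phi p r \<gamma> x \<ge> (2/p) powr (1/p) * \<gamma> * (1 - u)"
proof -
  have e1: "exp (u * \<gamma> powr p) - 1 \<ge> 0" using assms by simp
  have "(norm x)\<^sup>2 \<le> (r \<gamma> * sqrt (exp (u * \<gamma> powr p) - 1))\<^sup>2"
    using assms(6) by (intro power_mono) auto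
  hence "(norm x)\<^sup>2 \<le> (r \<gamma>)\<^sup>2 * (exp (u * \<gamma> powr p) - 1)" using e1 by (simp add: power_mult_distrib)
  hence "(norm x)\<^sup>2 / (r \<gamma>)\<^sup>2 \<le> exp (u * \<gamma> powr p) - 1" using assms(3)
    by (simp add: field_simps)
  hence "1 + (norm x)\<^sup>2 / (r \<gamma>)\<^sup>2 \<le> exp (u * \<gamma> powr p)" by simp
  hence "ln (1 + (norm x)\<^sup>2 / (r \<gamma>)\<^sup>2) \<le> u * \<gamma> powr p"
    by (metis add_pos_nonneg ln_exp ln_le_cancel_iff zero_le_divide_iff zero_le_power2 exp_gt_zero zero_less_one)
  hence "ln (1 + (norm x)\<^sup>2 / (r \<gamma>)\<^sup>2) / \<gamma> powr p \<le> u" using assms(2)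
    by (simp add: divide_le_eq)
  hence "1 - u \<le> max 0 (1 - ln (1 + (norm x)\<^sup>2 / (r \<gamma>)\<^sup>2) / \<gamma> powr p)" by simp
  thus ?thesis unfolding phi_def using assms
    by (simp add: mult_left_mono)
qed

lemma phi_cont: assumes "1 < p" "0 < \<gamma>" "r \<gamma> > 0" shows "continuous_on UNIV (phi p r \<gamma>)"
proof -
  have *: "1 + (norm x)\<^sup>2 / (r \<gamma>)\<^sup>2 \<noteq> 0" for x :: "real^2"
    using add_pos_nonneg[of 1 "(norm x)\<^sup>2 / (r \<gamma>)\<^sup>2"] by simp
  show ?thesis unfolding phi_def[abs_def]
    using assms * by (intro continuous_intros) auto
qed

lemma powr_split: "0 < (y::real) \<Longrightarrow> y powr p = y * y powr (p - 1)"
  using powr_add[of y 1 "p - 1"] by simp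

lemma powr_gap: fixes y e M p :: real
  assumes "1 < p" "0 < e" "e < M" "M \<le> y"
  shows "(y - e) powr p \<le> y powr p - e * (M - e) powr (p - 1)"
proof -
  have A: "(y - e) powr (p - 1) \<le> y powr (p - 1)" using assms by (intro powr_mono2) auto
  have Bv: "(M - e) powr (p - 1) \<le> (y - e) powr (p - 1)" using assms by (intro powr_mono2) auto
  have "y powr p - (y - e) powr p = y * y powr (p - 1) - (y - e) * (y - e) powr (p - 1)"
    using assms powr_split[of y p] powr_split[of "y - e" p] by simp
  also have "\<dots> \<ge> y * (y - e) powr (p - 1) - (y - e) * (y - e) powr (p - 1)"
    using A assms by (simp add: mult_left_mono)
  moreover have "y * (y - e) powr (p - 1) - (y - e) * (y - e) powr (p - 1) = e * (y - e) powr (p - 1)"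
    by (simp add: algebra_simps)
  moreover have "e * (M - e) powr (p - 1) \<le> e * (y - e) powr (p - 1)"
    using Bv assms by (simp add: mult_left_mono)
  ultimately show ?thesis by linarith
qed

lemma exp_half: "1 \<le> (z::real) \<Longrightarrow> exp z \<le> 2 * (exp z - 1)"
proof -
  assume "1 \<le> z"
  hence "exp 1 \<le> exp z" by simp
  moreover have "2 \<le> exp (1::real)" using exp_ge_add_one_self[of 1] by simp
  ultimately have "2 \<le> exp z" by linarith
  thus ?thesis by simp
qed


lemma asym: fixes u b a K tb :: real
  assumes "0 < u" "0 < b" "0 < a" "u + b = 1 + a/2" "0 < K" "0 < tb"
  shows "\<exists>X0. \<forall>X\<ge>X0. K * exp X < tb/2 * ((exp (u*X) - 1) * (exp (b*X) - 1))"
proof (intro exI allI impI)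
  fix X assume X: "max (max (1/u) (1/b)) (2 * ln (8*K/tb) / a + 1) \<le> X"
  have h1u: "1 \<le> u * X" using X assms by (auto simp: field_simps)
  hence hu: "exp (u*X) \<le> 2 * (exp (u*X) - 1)" by (rule exp_half)
  have h1b: "1 \<le> b * X" using X assms by (auto simp: field_simps)
  hence hb: "exp (b*X) \<le> 2 * (exp (b*X) - 1)" by (rule exp_half)
  have "ln (8*K/tb) < a * X / 2" using X assms by (auto simp: field_simps)
  hence "exp (ln (8*K/tb)) < exp (a * X / 2)" by simp
  hence k: "8*K/tb < exp (a * X / 2)" using assms by simp
  have "u*X + b*X = X + a*X/2"
  proof -
    have "(u+b)*X = (1+a/2)*X" using assms(4) by simp
    thus ?thesis by (simp add: algebra_simps)
  qed
  hence "exp (u*X) * exp (b*X) = exp X * exp (a * X / 2)"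
    by (simp add: exp_add[symmetric])
  have "K * exp X < tb/8 * exp (a * X / 2) * exp X"
    using k assms by (simp add: field_simps)
  also have "\<dots> = tb/8 * (exp (u*X) * exp (b*X))"
    using \<open>exp (u*X) * exp (b*X) = exp X * exp (a * X / 2)\<close> by simp
  also have "\<dots> \<le> tb/8 * ((2 * (exp (u*X) - 1)) * (2 * (exp (b*X) - 1)))"
    using hu hb assms h1u h1b by (intro mult_left_mono mult_mono) auto
  also have "\<dots> = tb/2 * ((exp (u*X) - 1) * (exp (b*X) - 1))" by (simp add: algebra_simps)
  finally show "K * exp X < tb/2 * ((exp (u*X) - 1) * (exp (b*X) - 1))" .
qed

lemma cball_measure: "0 \<le> \<rho> \<Longrightarrow> measure lborel (cball (0::real^2) \<rho>) = \<rho>^2 * measure lborel (ball (0::real^2) 1)"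
  using content_cball_conv_ball[of "0::real^2" \<rho>] content_ball_conv_unit_ball[of \<rho> "0::real^2"] by simp

definition GG :: "real \<Rightarrow> (real \<Rightarrow> real) \<Rightarrow> real \<Rightarrow> real \<Rightarrow> real^2 \<Rightarrow> real" where
  "GG p r \<gamma> \<tau> x = exp ((max 0 (phi p r \<gamma> x - \<tau>)) powr p) - 1"

definition NN :: "real \<Rightarrow> (real \<Rightarrow> real) \<Rightarrow> real \<Rightarrow> real \<Rightarrow> real" where
  "NN p r \<gamma> \<tau> = (LINT x|lborel. GG p r \<gamma> \<tau> x)"

context
  fixes p :: real and r :: "real \<Rightarrow> real" and \<gamma> :: real
  assumes p1: "1 < p" and g0: "0 < \<gamma>" and r0: "r \<gamma> > 0"
begin

abbreviation "B \<equiv> r \<gamma> * sqrt (exp (\<gamma> powr p))"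
abbreviation "CC \<equiv> (2/p) powr (1/p) * \<gamma>"

lemma G_nonneg: "0 \<le> GG p r \<gamma> \<tau> x"
  unfolding GG_def by simp

lemma G_anti: "\<sigma> \<le> \<tau> \<Longrightarrow> GG p r \<gamma> \<tau> x \<le> GG p r \<gamma> \<sigma> x"
  unfolding GG_def using p1 by (auto intro!: powr_mono2)

lemma G_strict: "\<sigma> < \<tau> \<Longrightarrow> \<sigma> < phi p r \<gamma> x \<Longrightarrow> GG p r \<gamma> \<tau> x < GG p r \<gamma> \<sigma> x"
  unfolding GG_def using p1 by (auto intro!: powr_less_mono2)

lemma G_supp: "norm x \<ge> B \<Longrightarrow> 0 \<le> \<tau> \<Longrightarrow> GG p r \<gamma> \<tau> x = 0"
  unfolding GG_def using phi_zero[where p=p and \<gamma>=\<gamma> and r=r and x=x, OF p1 g0 r0] by simp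

lemma G_top: "CC \<le> \<tau> \<Longrightarrow> GG p r \<gamma> \<tau> x = 0"
  unfolding GG_def using phi_le[OF p1 g0, of r x] by simp

lemma G_cont: "continuous_on UNIV (GG p r \<gamma> \<tau>)"
  unfolding GG_def[abs_def] using p1
  by (intro continuous_intros continuous_on_powr' phi_cont[where p=p and \<gamma>=\<gamma> and r=r, OF p1 g0 r0]) auto

lemma G_int: assumes "0 \<le> \<tau>" shows "integrable lborel (GG p r \<gamma> \<tau>)"
proof -
  have "integrable lborel (\<lambda>x. indicator (cball 0 B) x *\<^sub>R GG p r \<gamma> \<tau> x)"
    by (intro borel_integrable_compact compact_cball continuous_on_subset[OF G_cont]) auto
  moreover have "(\<lambda>x. indicator (cball 0 B) x *\<^sub>R GG p r \<gamma> \<tau> x) = GG p r \<gamma> \<tau>"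
    using G_supp[OF _ assms] by (auto simp: indicator_def fun_eq_iff)
  ultimately show ?thesis by simp
qed

lemma N_anti: "0 \<le> \<sigma> \<Longrightarrow> \<sigma> \<le> \<tau> \<Longrightarrow> NN p r \<gamma> \<tau> \<le> NN p r \<gamma> \<sigma>"
  unfolding NN_def by (intro integral_mono G_int G_anti) auto

lemma N_top: "NN p r \<gamma> CC = 0"
proof -
  have "GG p r \<gamma> CC = (\<lambda>x. 0)" using G_top by auto
  thus ?thesis unfolding NN_def by simp
qed

lemma N_cont: "continuous_on {0..CC} (NN p r \<gamma>)"
proof (rule continuous_on_sequentiallyI)
  fix u a assume u: "\<forall>n. u n \<in> {0..CC}" and a: "a \<in> {0..CC}" and lim: "u \<longlonglongrightarrow> a"
  show "(\<lambda>n. NN p r \<gamma> (u n)) \<longlonglongrightarrow> NN p r \<gamma> a"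
    unfolding NN_def
  proof (rule integral_dominated_convergence[where w="GG p r \<gamma> 0"])
    show "GG p r \<gamma> a \<in> borel_measurable lborel" using G_int a by auto
    show "\<And>n. GG p r \<gamma> (u n) \<in> borel_measurable lborel" using G_int u by auto
    show "integrable lborel (GG p r \<gamma> 0)" using G_int by auto
    show "AE x in lborel. (\<lambda>n. GG p r \<gamma> (u n) x) \<longlonglongrightarrow> GG p r \<gamma> a x"
      unfolding GG_def using p1 by (intro AE_I2 tendsto_intros lim) auto
    show "\<And>n. AE x in lborel. norm (GG p r \<gamma> (u n) x) \<le> GG p r \<gamma> 0 x"
      using u G_nonneg G_anti by (intro AE_I2) auto
  qed
qed

lemma N_strict: assumes "0 \<le> \<sigma>" "\<sigma> < \<tau>" "\<sigma> < CC"
  shows "NN p r \<gamma> \<tau> < NN p r \<gamma> \<sigma>"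
proof -
  let ?d = "\<lambda>x. GG p r \<gamma> \<sigma> x - GG p r \<gamma> \<tau> x"
  have int: "integrable lborel ?d" using G_int assms by auto
  have nn: "AE x in lborel. 0 \<le> ?d x" using G_anti assms by (intro AE_I2) auto
  have eq: "NN p r \<gamma> \<sigma> - NN p r \<gamma> \<tau> = integral\<^sup>L lborel ?d"
    unfolding NN_def using G_int[of \<sigma>] G_int[of \<tau>] assms by (simp add: integral_diff)
  have le: "NN p r \<gamma> \<tau> \<le> NN p r \<gamma> \<sigma>" using N_anti assms by auto
  have "NN p r \<gamma> \<sigma> - NN p r \<gamma> \<tau> \<noteq> 0"
  proof
    assume "NN p r \<gamma> \<sigma> - NN p r \<gamma> \<tau> = 0"
    hence "AE x in lborel. ?d x = 0" using integral_nonneg_eq_0_iff_AE[OF int nn] eq by simp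
    then obtain N0 where N0: "{x \<in> space lborel. \<not> ?d x = 0} \<subseteq> N0" "emeasure lborel N0 = 0" "N0 \<in> sets lborel"
      by (rule AE_E)
    have "open {x. (\<lambda>_. \<sigma>) x < phi p r \<gamma> x}"
      by (rule open_Collect_less) (auto intro: phi_cont[where p=p and \<gamma>=\<gamma> and r=r, OF p1 g0 r0])
    moreover have "(0::real^2) \<in> {x. \<sigma> < phi p r \<gamma> x}" using phi_0[OF p1 g0] assms by simp
    ultimately obtain e where e: "e > 0" "ball 0 e \<subseteq> {x. \<sigma> < phi p r \<gamma> x}"
      by (metis open_contains_ball)
    have "ball 0 e \<subseteq> N0"
    proof
      fix x assume "x \<in> ball (0::real^2) e"
      hence "\<sigma> < phi p r \<gamma> x" using e by auto
      hence "?d x \<noteq> 0" using G_strict[of \<sigma> \<tau> x] assms by simp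
      thus "x \<in> N0" using N0(1) by auto
    qed
    hence "emeasure lborel (ball (0::real^2) e) \<le> emeasure lborel N0" by (rule emeasure_mono) fact
    hence "emeasure lborel (ball (0::real^2) e) = 0" using N0 by simp
    moreover have "emeasure lborel (ball (0::real^2) e) = ennreal (measure lborel (ball (0::real^2) e))"
      using emeasure_lborel_ball_finite[of "0::real^2" e] by (intro emeasure_eq_ennreal_measure) auto
    moreover have "measure lborel (ball (0::real^2) e) > 0" using content_ball_pos e by blast
    ultimately show False by simp
  qed
  thus ?thesis using le by simp
qed

lemma N0_pos: "NN p r \<gamma> 0 > 0"
  using N_strict[of 0 CC] N_top p1 g0 by simp

lemma ratio_eq: "ratio p r \<gamma> \<tau> = NN p r \<gamma> \<tau> / NN p r \<gamma> 0"
proof -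
  have "\<And>x. max 0 (phi p r \<gamma> x - 0) = phi p r \<gamma> x" using phi_nonneg[OF p1, of \<gamma>] g0 by simp
  thus ?thesis unfolding ratio_def NN_def GG_def by simp
qed

lemma tau_char: assumes "0 \<le> t" "t \<le> 1"
  shows "tau p r t \<gamma> \<in> {0..CC} \<and> NN p r \<gamma> (tau p r t \<gamma>) = t * NN p r \<gamma> 0"
proof -
  have D: "NN p r \<gamma> 0 > 0" by (rule N0_pos)
  have C0: "0 \<le> CC" using p1 g0 by simp
  obtain x where x: "0 \<le> x" "x \<le> CC" "NN p r \<gamma> x = t * NN p r \<gamma> 0"
    using IVT2'[of "NN p r \<gamma>" CC "t * NN p r \<gamma> 0" 0, OF _ _ C0 N_cont] N_top D assms
    by (auto simp: mult_left_le_one_le mult_nonneg_nonneg)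
  have uniq: "y = x" if "y \<in> {0..CC}" "ratio p r \<gamma> y = t" for y
  proof -
    have "NN p r \<gamma> y = t * NN p r \<gamma> 0" using that D by (simp add: ratio_eq field_simps)
    thus ?thesis using N_strict[of x y] N_strict[of y x] x that
      by (cases "x < y"; cases "y < x") auto
  qed
  have "x \<in> {0..CC} \<and> ratio p r \<gamma> x = t" using x D by (simp add: ratio_eq)
  hence "tau p r t \<gamma> = x" unfolding tau_def using uniq by (intro the_equality) auto
  thus ?thesis using x by simp
qed

lemma G_upper: assumes "0 < e" "1 \<le> M" "e < M" "2 * exp (-(e * (M - e) powr (p - 1))) \<le> tb/2"
  shows "GG p r \<gamma> e x \<le> tb/2 * GG p r \<gamma> 0 x + indicator (cball 0 B) x * exp (M powr p)"
proof -
  define y where "y = phi p r \<gamma> x"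
  have y0: "0 \<le> y" unfolding y_def using phi_nonneg[OF p1] g0 by simp
  have "0 < 2 * exp (-(e * (M - e) powr (p - 1)))" by simp
  hence tb: "0 < tb" using assms(4) by linarith
  have G0: "GG p r \<gamma> 0 x = exp (y powr p) - 1" unfolding GG_def y_def[symmetric] using y0 by simp
  have ind: "0 \<le> indicator (cball 0 B) x * exp (M powr p)" by simp
  show ?thesis
  proof (cases "M \<le> y")
    case True
    have Ge: "GG p r \<gamma> e x = exp ((y - e) powr p) - 1" unfolding GG_def y_def[symmetric]
      using True assms by simp
    let ?D = "e * (M - e) powr (p - 1)"
    have "(y - e) powr p \<le> y powr p - ?D" using powr_gap[of p e M y] p1 assms True by simp
    hence "exp ((y - e) powr p) \<le> exp (y powr p - ?D)" by simp
    also have "\<dots> = exp (-?D) * exp (y powr p)" by (simp add: exp_diff exp_minus field_simps)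
    also have "\<dots> \<le> exp (-?D) * (2 * (exp (y powr p) - 1))"
      using exp_half[of "y powr p"] ge_one_powr_ge_zero[of y p] True assms p1 by simp
    also have "\<dots> = (2 * exp (-?D)) * (exp (y powr p) - 1)" by simp
    also have "\<dots> \<le> tb/2 * (exp (y powr p) - 1)"
      using assms(4) by (intro mult_right_mono) (use y0 p1 in auto)
    finally have "exp ((y - e) powr p) \<le> tb/2 * GG p r \<gamma> 0 x" using G0 by simp
    thus ?thesis using Ge ind by linarith
  next
    case False
    show ?thesis
    proof (cases "x \<in> cball 0 B")
      case True
      have "GG p r \<gamma> e x \<le> GG p r \<gamma> 0 x" using G_anti assms by simp
      also have "\<dots> \<le> exp (M powr p)"
      proof -
        have "exp (y powr p) \<le> exp (M powr p)" using powr_mono2[of p y M] y0 False p1 by simp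
        thus ?thesis unfolding G0 by linarith
      qed
      finally have "GG p r \<gamma> e x \<le> exp (M powr p)" .
      moreover have "0 \<le> tb/2 * GG p r \<gamma> 0 x" using G_nonneg[of 0 x] tb by simp
      ultimately show ?thesis using True by simp
    next
      case False
      hence "GG p r \<gamma> e x = 0" using G_supp[of x e] assms by (simp add: dist_norm)
      thus ?thesis using G_nonneg[of 0 x] tb by simp
    qed
  qed
qed

lemma N_upper: assumes "0 < e" "1 \<le> M" "e < M" "2 * exp (-(e * (M - e) powr (p - 1))) \<le> tb/2"
  shows "NN p r \<gamma> e \<le> tb/2 * NN p r \<gamma> 0 + measure lborel (cball (0::real^2) B) * exp (M powr p)"
proof -
  have ii: "integrable lborel (\<lambda>x. indicator (cball (0::real^2) B) x * exp (M powr p))"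
    using emeasure_lborel_cball_finite[of "0::real^2" B] by (intro integrable_mult_left integrable_real_indicator) auto
  have i2: "integrable lborel (\<lambda>x. tb/2 * GG p r \<gamma> 0 x + indicator (cball (0::real^2) B) x * exp (M powr p))"
    by (rule Bochner_Integration.integrable_add[OF integrable_mult_right[OF G_int[OF order_refl]] ii])
  have "NN p r \<gamma> e \<le> (LINT x|lborel. tb/2 * GG p r \<gamma> 0 x + indicator (cball 0 B) x * exp (M powr p))"
    unfolding NN_def
    by (rule integral_mono[OF G_int i2 G_upper[OF assms]]) (use assms in auto)
  also have "\<dots> = tb/2 * NN p r \<gamma> 0 + measure lborel (cball (0::real^2) B) * exp (M powr p)"
    unfolding NN_def
    by (subst Bochner_Integration.integral_add[OF integrable_mult_right[OF G_int[OF order_refl]] ii]) simp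
  finally show ?thesis .
qed

lemma N_lower: assumes "0 \<le> u" "u \<le> 1"
  shows "measure lborel (cball (0::real^2) (r \<gamma> * sqrt (exp (u * \<gamma> powr p) - 1))) * (exp ((CC * (1 - u)) powr p) - 1) \<le> NN p r \<gamma> 0"
proof -
  let ?S = "cball (0::real^2) (r \<gamma> * sqrt (exp (u * \<gamma> powr p) - 1))"
  let ?K = "exp ((CC * (1 - u)) powr p) - 1"
  have ii: "integrable lborel (\<lambda>x. indicator ?S x * ?K)"
    using emeasure_lborel_cball_finite by (intro integrable_mult_left integrable_real_indicator) auto
  have pt: "indicator ?S x * ?K \<le> GG p r \<gamma> 0 x" for x
  proof (cases "x \<in> ?S")
    case True
    have "CC * (1 - u) \<le> phi p r \<gamma> x" using phi_lower[where p=p and \<gamma>=\<gamma> and r=r and x=x, OF p1 g0 r0 assms] True by simp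
    moreover have "0 \<le> CC * (1 - u)" using assms p1 g0 by simp
    ultimately have "(CC * (1 - u)) powr p \<le> phi p r \<gamma> x powr p" using p1 by (intro powr_mono2) auto
    moreover have "GG p r \<gamma> 0 x = exp (phi p r \<gamma> x powr p) - 1"
      unfolding GG_def using phi_nonneg[OF p1, of \<gamma> r x] g0 by simp
    ultimately show ?thesis using True by simp
  next
    case False thus ?thesis using G_nonneg[of 0 x] by simp
  qed
  have "(LINT x|lborel. indicator ?S x * ?K) \<le> NN p r \<gamma> 0"
    unfolding NN_def by (intro integral_mono ii G_int pt) auto
  thus ?thesis by simp
qed

lemma N_small: assumes p2: "p < 2" and e: "0 < e" and M: "1 \<le> M" "e < M"
  and tb: "2 * exp (-(e * (M - e) powr (p - 1))) \<le> tb/2"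
  and u: "0 < u" "u < 1/2" and b: "b = (2/p) * (1 - 2*u)"
  and key: "exp (M powr p) * exp (\<gamma> powr p) < tb/2 * ((exp (u*\<gamma> powr p) - 1) * (exp (b*\<gamma> powr p) - 1))"
  shows "NN p r \<gamma> e < tb * NN p r \<gamma> 0"
proof -
  define X where "X = \<gamma> powr p"
  define V where "V = measure lborel (ball (0::real^2) 1)"
  define \<rho> where "\<rho> = r \<gamma> * sqrt (exp (u * X) - 1)"
  have "0 < 2 * exp (-(e * (M - e) powr (p - 1)))" by simp
  hence tbp: "0 < tb" using tb by linarith
  have V: "V > 0" unfolding V_def using content_ball_pos[of 1 "0::real^2"] by simp
  have X0: "X > 0" unfolding X_def using g0 by simp
  have eu: "exp (u * X) - 1 \<ge> 0" using u X0 by simp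
  have mB: "measure lborel (cball (0::real^2) B) = V * ((r \<gamma>)^2 * exp X)"
    using r0 by (subst cball_measure) (auto simp: V_def X_def power_mult_distrib)
  have m\<rho>: "measure lborel (cball (0::real^2) \<rho>) = V * ((r \<gamma>)^2 * (exp (u * X) - 1))"
    using r0 eu by (subst cball_measure) (auto simp: V_def \<rho>_def power_mult_distrib)
  have "(CC * (1 - u)) powr p = ((2/p) powr (1/p)) powr p * X * (1 - u) powr p"
    unfolding X_def by (simp add: powr_mult)
  also have "\<dots> = (2/p) * X * (1 - u) powr p" using cpowr[OF p1] by simp
  finally have Phi: "(CC * (1 - u)) powr p = (2/p) * X * (1 - u) powr p" .
  have "(1 - u) powr 2 \<le> (1 - u) powr p" using u p2 by (intro powr_mono') auto
  moreover have "(1 - u) powr 2 = (1 - u)^2" using u by (simp add: powr_realpow)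
  moreover have "1 - 2*u \<le> (1 - u)^2" by (simp add: power2_eq_square algebra_simps)
  ultimately have "1 - 2*u \<le> (1 - u) powr p" by linarith
  hence "(2/p*X) * (1 - 2*u) \<le> (2/p*X) * (1 - u) powr p" using X0 p1
    by (intro mult_left_mono) auto
  moreover have "b * X = (2/p*X) * (1 - 2*u)" unfolding b by simp
  moreover have "(CC * (1 - u)) powr p = (2/p*X) * (1 - u) powr p" unfolding Phi by simp
  ultimately have "b * X \<le> (CC * (1 - u)) powr p" by simp
  hence Pb: "exp (b * X) - 1 \<le> exp ((CC * (1 - u)) powr p) - 1" by simp
  have low: "V * ((r \<gamma>)^2 * (exp (u * X) - 1)) * (exp ((CC * (1 - u)) powr p) - 1) \<le> NN p r \<gamma> 0"
  proof -
    have "measure lborel (cball (0::real^2) \<rho>) * (exp ((CC * (1 - u)) powr p) - 1) \<le> NN p r \<gamma> 0"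
      using N_lower[of u] u by (simp add: \<rho>_def X_def)
    thus ?thesis unfolding m\<rho> .
  qed
  have up: "NN p r \<gamma> e \<le> tb/2 * NN p r \<gamma> 0 + V * ((r \<gamma>)^2 * exp X) * exp (M powr p)"
    using N_upper[OF e M tb] mB by simp
  have pos: "V * (r \<gamma>)^2 > 0" using V r0 by simp
  have "V * ((r \<gamma>)^2 * exp X) * exp (M powr p) = (V * (r \<gamma>)^2) * (exp (M powr p) * exp X)"
    by simp
  also have "\<dots> < (V * (r \<gamma>)^2) * (tb/2 * ((exp (u*X) - 1) * (exp (b*X) - 1)))"
    using mult_strict_left_mono[OF key pos] unfolding X_def by simp
  also have "\<dots> \<le> (V * (r \<gamma>)^2) * (tb/2 * ((exp (u*X) - 1) * (exp ((CC * (1 - u)) powr p) - 1)))"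
    using Pb eu pos tbp by (intro mult_left_mono mult_mono) auto
  also have "\<dots> = tb/2 * (V * ((r \<gamma>)^2 * (exp (u * X) - 1)) * (exp ((CC * (1 - u)) powr p) - 1))"
    by simp
  also have "\<dots> \<le> tb/2 * NN p r \<gamma> 0" using low tbp by (intro mult_left_mono) auto
  finally show ?thesis using up by linarith
qed

end

theorem lemma1p9:
  fixes p tbar :: real and r :: "real \<Rightarrow> real"
  assumes "1 < p" "p < 2"
    and "\<And>\<gamma>. \<gamma> > 0 \<Longrightarrow> r \<gamma> > 0"
    and "r \<in> o[at_top](\<lambda>\<gamma>. exp (- (\<gamma> powr p)))"
    and "(\<lambda>\<gamma>. ln (r \<gamma> * exp (\<gamma> powr p))) \<in> o[at_top](\<lambda>\<gamma>. \<gamma> powr p)"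
    and "0 < tbar" "tbar \<le> 1"
  shows "uniform_limit {tbar..1} (\<lambda>\<gamma> t. tau p r t \<gamma>) (\<lambda>t. 0) at_top"
proof -
  have p1: "1 < p" and p2: "p < 2" and tb0: "0 < tbar" and tb1: "tbar \<le> 1" using assms by auto
  define a where "a = 2/p - 1"
  define u where "u = a / (2*(2*a+1))"
  define b where "b = (2/p) * (1 - 2*u)"
  have a0: "0 < a" unfolding a_def using p2 p1 by (simp add: field_simps)
  have u0: "0 < u" "u < 1/2" unfolding u_def using a0 by (auto simp: field_simps)
  have b0: "0 < b" unfolding b_def using u0 p1 by simp
  have ub: "u + b = 1 + a/2"
  proof -
    have "2/p = a + 1" unfolding a_def by simp
    hence "b = (a+1) * (1 - 2*u)" unfolding b_def by simp
    thus ?thesis unfolding u_def using a0 by (simp add: field_simps)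
  qed
  show ?thesis unfolding uniform_limit_iff
  proof (intro allI impI)
    fix e :: real assume e: "0 < e"
    define L where "L = \<bar>ln (4/tbar)\<bar>"
    define M where "M = e + 1 + (L/e) powr (1/(p-1))"
    have Mp: "0 \<le> (L/e) powr (1/(p-1))" by simp
    have M1: "1 \<le> M" "e < M" unfolding M_def using e Mp by linarith+
    have "((L/e) powr (1/(p-1))) powr (p-1) \<le> (M - e) powr (p-1)"
      unfolding M_def using p1 by (intro powr_mono2) auto
    moreover have "((L/e) powr (1/(p-1))) powr (p-1) = L/e"
      using p1 e by (simp add: powr_powr L_def)
    ultimately have "L/e \<le> (M - e) powr (p-1)" by simp
    hence "L \<le> e * (M - e) powr (p-1)" using e by (simp add: field_simps)
    moreover have "ln (4/tbar) \<le> L" unfolding L_def by simp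
    ultimately have "-(e * (M - e) powr (p - 1)) \<le> - ln (4/tbar)" by linarith
    hence "exp (-(e * (M - e) powr (p - 1))) \<le> exp (- ln (4/tbar))" by simp
    also have "\<dots> = tbar/4" using tb0 by (simp add: exp_minus)
    finally have tbc: "2 * exp (-(e * (M - e) powr (p - 1))) \<le> tbar/2" by simp
    obtain X0 where X0: "\<And>X. X \<ge> X0 \<Longrightarrow> exp (M powr p) * exp X < tbar/2 * ((exp (u*X) - 1) * (exp (b*X) - 1))"
      using asym[OF u0(1) b0 a0 ub, of "exp (M powr p)" tbar] tb0 by auto
    show "\<forall>\<^sub>F \<gamma> in at_top. \<forall>t\<in>{tbar..1}. dist (tau p r t \<gamma>) 0 < e"
      unfolding eventually_at_top_linorder
    proof (intro exI allI impI ballI)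
      fix \<gamma> t assume \<gamma>: "max 1 X0 \<le> \<gamma>" and t: "t \<in> {tbar..1}"
      have g0: "0 < \<gamma>" using \<gamma> by simp
      have r0: "0 < r \<gamma>" using assms(3) g0 by simp
      have "\<gamma> powr 1 \<le> \<gamma> powr p" using \<gamma> p1 by (intro powr_mono) auto
      hence "\<gamma> \<le> \<gamma> powr p" using g0 by simp
      hence "X0 \<le> \<gamma> powr p" using \<gamma> by simp
      hence key: "exp (M powr p) * exp (\<gamma> powr p) < tbar/2 * ((exp (u*\<gamma> powr p) - 1) * (exp (b*\<gamma> powr p) - 1))"
        using X0 by blast
      have small: "NN p r \<gamma> e < tbar * NN p r \<gamma> 0"
        by (rule N_small[where p=p and r=r and \<gamma>=\<gamma>, OF p1 g0 r0 p2 e M1 tbc u0 b_def key])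
      define \<tau> where "\<tau> = tau p r t \<gamma>"
      have tc: "\<tau> \<in> {0..(2/p) powr (1/p) * \<gamma>}" "NN p r \<gamma> \<tau> = t * NN p r \<gamma> 0"
        using tau_char[where p=p and r=r and \<gamma>=\<gamma>, OF p1 g0 r0, of t] t tb0 unfolding \<tau>_def by auto
      have D: "0 < NN p r \<gamma> 0" using N0_pos[where p=p and r=r and \<gamma>=\<gamma>, OF p1 g0 r0] .
      have "\<tau> < e"
      proof (rule ccontr)
        assume "\<not> \<tau> < e"
        hence "NN p r \<gamma> \<tau> \<le> NN p r \<gamma> e" using N_anti[where p=p and r=r and \<gamma>=\<gamma>, OF p1 g0 r0, of e \<tau>] e by simp
        moreover have "tbar * NN p r \<gamma> 0 \<le> t * NN p r \<gamma> 0" using t D by (intro mult_right_mono) auto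
        ultimately show False using small tc(2) by linarith
      qed
      thus "dist (tau p r t \<gamma>) 0 < e" using tc(1) unfolding \<tau>_def by simp
    qed
  qed
qed

end
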